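(* For integers $n\ge 0$ and $k\ge 0$ (as polynomial identity in $x$, $x\neq -1$), \[ \frac{d^{k}}{dx^{k}}w_{n}(x)=\frac{k!}{(1+x)^{k}}\sum_{m=k}^{n}\sum_{j=0}^{k}\binom{n}{m}\genfrac{\{}{\}}{0pt}{}{m}{k}\genfrac{[}{]}{0pt}{}{k+1}{j+1}\,w_{n-m+j}(x). \]
   Context: $\genfrac{\{}{\}}{0pt}{}{n}{k}$ denotes the Stirling numbers of the second kind and $\genfrac{[}{]}{0pt}{}{n}{k}$ the unsigned Stirling numbers of the first kind. The geometric polynomials are $w_n(x)=\sum_{k=0}^{n}\genfrac{\{}{\}}{0pt}{}{n}{k}k!\,x^k$. *)

theory Defs
  imports "HOL-Analysis.Analysis" "HOL-Combinatorics.Stirling"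
begin

text \<open>Geometric polynomials: w_n(x) = sum_{k=0}^n S(n,k) k! x^k, with S(n,k) the
Stirling numbers of the second kind (library constant Stirling).\<close>
definition geom_poly :: "nat \<Rightarrow> real \<Rightarrow> real" where
  "geom_poly n x = (\<Sum>k = 0..n. of_nat (Stirling n k) * fact k * x ^ k)"

end

theory Submission imports Defs "HOL-Computational_Algebra.Formal_Power_Series" "HOL-Computational_Algebra.Polynomial"
begin

definition Ar :: "real fps" where "Ar = Abs_fps (\<lambda>n. if n = 0 then 0 else 1 / fact n)"

lemma Ar_deriv: "fps_deriv Ar = Ar + 1"
proof (rule fps_ext)
  fix n
  show "fps_nth (fps_deriv Ar) n = fps_nth (Ar + 1) n"
    by (cases n) (simp_all add: Ar_def field_simps del: of_nat_Suc)
qed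

lemma Ar_pow: "fps_nth (Ar ^ j) n = fact j * real (Stirling n j) / fact n"
proof (induction n arbitrary: j)
  case 0
  then show ?case by (cases j) (simp_all add: fps_power_zeroth Ar_def)
next
  case (Suc n)
  show ?case
  proof (cases j)
    case 0
    then show ?thesis by simp
  next
    case (Suc i)
    have "fps_deriv (Ar ^ Suc i) = of_nat (Suc i) * (Ar ^ Suc i + Ar ^ i)"
    proof -
      have "fps_deriv (Ar ^ Suc i) = of_nat (Suc i) * fps_deriv Ar * Ar ^ i"
        by (subst fps_deriv_power') simp
      then show ?thesis by (simp only: Ar_deriv) (simp add: algebra_simps del: of_nat_Suc)
    qed
    hence "fps_nth (fps_deriv (Ar ^ Suc i)) n = of_nat (Suc i) * (fps_nth (Ar ^ Suc i) n + fps_nth (Ar ^ i) n)"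
      by (simp only: fps_mult_of_nat_nth fps_add_nth)
    hence "of_nat (Suc n) * fps_nth (Ar ^ Suc i) (Suc n) = of_nat (Suc i) * (fps_nth (Ar ^ Suc i) n + fps_nth (Ar ^ i) n)"
      by (simp only: fps_deriv_nth Suc_eq_plus1)
    hence "fps_nth (Ar ^ Suc i) (Suc n) = of_nat (Suc i) * (fps_nth (Ar ^ Suc i) n + fps_nth (Ar ^ i) n) / of_nat (Suc n)"
      by (simp add: field_simps del: of_nat_Suc)
    also have "\<dots> = fact (Suc i) * real (Stirling (Suc n) (Suc i)) / fact (Suc n)"
      unfolding Suc.IH by (simp add: field_simps)
    finally show ?thesis using Suc by simp
  qed
qed

lemma const_add: "[: a + b :] = [: a :] + [: b :]"
  by simp

lemma const_sum: "[: sum f A :] = (\<Sum>x\<in>A. [: f x :])"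
proof (induction A rule: infinite_finite_induct)
  case (insert x F)
  then show ?case by (simp only: sum.insert[OF insert(1,2)] const_add insert(3))
qed simp_all

definition cst :: "real fps \<Rightarrow> real poly fps" where
  "cst f = Abs_fps (\<lambda>n. [: fps_nth f n :])"

lemma cst_nth [simp]: "fps_nth (cst f) n = [: fps_nth f n :]"
  by (simp add: cst_def)

lemma cst_mult: "cst (f * g) = cst f * cst g"
  by (rule fps_ext) (simp add: fps_mult_nth const_sum mult_to_poly mult.commute)

lemma cst_one: "cst 1 = 1"
  by (rule fps_ext) simp

lemma cst_power: "cst (f ^ k) = cst f ^ k"
  by (induction k) (simp_all add: cst_one cst_mult)

lemma cst_add: "cst (f + g) = cst f + cst g"
  by (rule fps_ext) simp

lemma cst_deriv: "fps_deriv (cst f) = cst (fps_deriv f)"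
  by (rule fps_ext) (simp add: of_nat_poly mult_to_poly)

definition Ap :: "real poly fps" where "Ap = cst Ar"
definition Xp :: "real poly fps" where "Xp = fps_const [:0,1:]"
definition U :: "real poly fps" where "U = 1 - Xp * Ap"
definition P :: "real poly fps" where "P = fps_const [:1,1:]"

definition Wp :: "nat \<Rightarrow> real poly" where
  "Wp n = (\<Sum>j\<le>n. monom (real (Stirling n j) * fact j) j)"

lemma poly_Wp: "poly (Wp n) = geom_poly n"
  by (rule ext) (simp add: Wp_def geom_poly_def poly_sum poly_monom atLeast0AtMost mult_ac)

definition H :: "real poly fps" where "H = Abs_fps (\<lambda>n. smult (1 / fact n) (Wp n))"

lemma H_nth: "fps_nth H n = smult (1 / fact n) (Wp n)"
  by (simp add: H_def)

lemma XA_pow_nth: "fps_nth ((Xp * Ap) ^ j) n = monom (fps_nth (Ar ^ j) n) j"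
proof -
  have "(Xp * Ap) ^ j = fps_const ([:0,1:] ^ j) * cst (Ar ^ j)"
    by (simp add: Xp_def Ap_def power_mult_distrib cst_power)
  then show ?thesis
    by (simp add: monom_altdef)
qed

lemma smult_sum2: "smult c (\<Sum>i\<in>S. f i) = (\<Sum>i\<in>S. smult c (f i))"
  by (induction S rule: infinite_finite_induct) (simp_all add: smult_add_right)

lemma H_trunc:
  assumes "n \<le> N"
  shows "fps_nth H n = fps_nth (\<Sum>j\<le>N. (Xp * Ap) ^ j) n"
proof -
  have "fps_nth (\<Sum>j\<le>N. (Xp * Ap) ^ j) n = (\<Sum>j\<le>N. monom (fact j * real (Stirling n j) / fact n) j)"
    by (simp add: fps_sum_nth XA_pow_nth Ar_pow)
  also have "\<dots> = (\<Sum>j\<le>n. monom (fact j * real (Stirling n j) / fact n) j)"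
    by (rule sum.mono_neutral_right) (use assms in auto)
  also have "\<dots> = fps_nth H n"
    by (simp add: H_nth Wp_def smult_sum2 smult_monom mult_ac)
  finally show ?thesis by simp
qed

lemma geo: "(\<Sum>j\<le>N. f ^ j) * (1 - f) = (1 :: 'a :: comm_ring_1) - f ^ Suc N"
proof (induction N)
  case (Suc N)
  have "(\<Sum>j\<le>Suc N. f ^ j) * (1 - f) = (\<Sum>j\<le>N. f ^ j) * (1 - f) + f ^ Suc N * (1 - f)"
    by (simp add: algebra_simps)
  also have "\<dots> = 1 - f ^ Suc (Suc N)"
    unfolding Suc.IH by (simp add: algebra_simps)
  finally show ?case .
qed simp

lemma H_U: "H * U = 1"
proof (rule fps_ext)
  fix n
  define G where "G = (\<Sum>j\<le>n. (Xp * Ap) ^ j)"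
  have "fps_nth (H * U) n = fps_nth (G * U) n"
    unfolding fps_mult_nth
    by (rule sum.cong) (simp_all add: G_def H_trunc)
  also have "G * U = 1 - (Xp * Ap) ^ Suc n"
    unfolding G_def U_def by (rule geo)
  also have "fps_nth (1 - (Xp * Ap) ^ Suc n) n = fps_nth 1 n"
    by (simp only: fps_sub_nth XA_pow_nth Ar_pow) simp
  finally show "fps_nth (H * U) n = fps_nth 1 n" .
qed

lemma P_eq: "P = 1 + Xp"
proof -
  have "[:1, 1:] = 1 + [:0, 1:]" by (simp add: one_pCons)
  then show ?thesis by (simp add: P_def Xp_def)
qed

lemma deriv_U: "fps_deriv U = U - P"
proof -
  have "fps_deriv Ap = Ap + 1"
    by (simp add: Ap_def cst_deriv Ar_deriv cst_add cst_one)
  then show ?thesis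
    by (simp add: U_def P_eq Xp_def algebra_simps)
qed

lemma deriv_H: "fps_deriv H = P * H ^ 2 - H"
proof -
  have "fps_deriv (H * U) = 0" by (simp only: H_U) simp
  hence "fps_deriv H * U = - (H * (U - P))"
    by (simp add: deriv_U algebra_simps)
  hence "fps_deriv H * U * H = - (H * (U - P)) * H" by simp
  moreover have "fps_deriv H * U * H = fps_deriv H"
    using H_U by (simp add: mult.assoc mult.commute[of U H])
  moreover have "- (H * (U - P)) * H = P * H ^ 2 - H"
    using H_U by (simp add: algebra_simps power2_eq_square)
  ultimately show ?thesis by simp
qed

primrec B :: "nat \<Rightarrow> real poly fps" where
  "B 0 = H"
| "B (Suc k) = fps_deriv (B k) + of_nat (Suc k) * B k"

lemma deriv_P_pow: "fps_deriv (P ^ k) = 0"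
  by (simp add: P_def)

lemma deriv_of_nat_mult: "fps_deriv (of_nat c * f) = of_nat c * fps_deriv (f :: 'a :: comm_ring_1 fps)"
  by (simp add: fps_of_nat[symmetric] del: of_nat_fact)

lemma B_closed: "B k = of_nat (fact k) * P ^ k * H ^ Suc k"
proof (induction k)
  case 0
  then show ?case by simp
next
  case (Suc k)
  have d: "fps_deriv (H ^ Suc k) = of_nat (Suc k) * H ^ k * (P * H ^ 2 - H)"
    by (subst fps_deriv_power') (simp add: deriv_H)
  have "B (Suc k) = of_nat (fact k) * P ^ k * fps_deriv (H ^ Suc k) + of_nat (Suc k) * (of_nat (fact k) * P ^ k * H ^ Suc k)"
  proof -
    have "fps_deriv (P ^ k * H ^ Suc k) = P ^ k * fps_deriv (H ^ Suc k)"
      by (simp only: fps_deriv_mult deriv_P_pow) simp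
    then show ?thesis
      by (simp only: B.simps Suc.IH mult.assoc deriv_of_nat_mult)
  qed
  also have "\<dots> = of_nat (fact (Suc k)) * P ^ Suc k * H ^ Suc (Suc k)"
    unfolding d by (simp add: algebra_simps power2_eq_square)
  finally show ?case .
qed

definition SS :: "nat \<Rightarrow> nat \<Rightarrow> real poly" where
  "SS k N = (\<Sum>j\<le>k. smult (real (stirling (Suc k) (Suc j))) (Wp (N + j)))"

lemma SS_Suc: "SS (Suc k) N = SS k (Suc N) + smult (real (Suc k)) (SS k N)"
proof -
  have "SS (Suc k) N = (\<Sum>j\<le>Suc k. smult (real (Suc k) * real (stirling (Suc k) (Suc j))) (Wp (N + j)))
        + (\<Sum>j\<le>Suc k. smult (real (stirling (Suc k) j)) (Wp (N + j)))"
    unfolding SS_def sum.distrib[symmetric]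
  proof (intro sum.cong refl)
    fix j
    have "stirling (Suc (Suc k)) (Suc j) = Suc k * stirling (Suc k) (Suc j) + stirling (Suc k) j"
      by simp
    hence "real (stirling (Suc (Suc k)) (Suc j)) = real (Suc k) * real (stirling (Suc k) (Suc j)) + real (stirling (Suc k) j)"
      by (simp only: of_nat_add of_nat_mult)
    then show "smult (real (stirling (Suc (Suc k)) (Suc j))) (Wp (N + j)) =
      smult (real (Suc k) * real (stirling (Suc k) (Suc j))) (Wp (N + j)) + smult (real (stirling (Suc k) j)) (Wp (N + j))"
      by (simp only: smult_add_left)
  qed
  also have "(\<Sum>j\<le>Suc k. smult (real (Suc k) * real (stirling (Suc k) (Suc j))) (Wp (N + j)))
      = smult (real (Suc k)) (SS k N)"
    unfolding SS_def by (simp add: smult_sum2 del: of_nat_Suc)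
  also have "(\<Sum>j\<le>Suc k. smult (real (stirling (Suc k) j)) (Wp (N + j))) = SS k (Suc N)"
    unfolding SS_def by (subst sum.atMost_Suc_shift) simp
  finally show ?thesis by simp
qed

lemma of_nat_poly_mult: "(of_nat m :: real poly) * p = smult (real m) p"
  by (simp add: of_nat_poly)

lemma B_nth: "fps_nth (B k) N = smult (1 / fact N) (SS k N)"
proof (induction k arbitrary: N)
  case 0
  then show ?case by (simp add: SS_def H_nth)
next
  case (Suc k)
  have "fps_nth (B (Suc k)) N = smult (real (Suc N)) (fps_nth (B k) (Suc N)) + smult (real (Suc k)) (fps_nth (B k) N)"
    by (simp add: of_nat_poly_mult del: of_nat_Suc)
  also have "\<dots> = smult (1 / fact N) (SS (Suc k) N)"
    unfolding Suc.IH SS_Suc by (simp add: smult_add_right field_simps del: of_nat_Suc)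
  finally show ?case .
qed

definition Dx :: "real poly fps \<Rightarrow> real poly fps" where
  "Dx f = Abs_fps (\<lambda>n. pderiv (fps_nth f n))"

lemma Dx_nth [simp]: "fps_nth (Dx f) n = pderiv (fps_nth f n)"
  by (simp add: Dx_def)

lemma pderiv_sum2: "pderiv (\<Sum>i\<in>S. f i) = (\<Sum>i\<in>S. pderiv (f i))"
  by (induction S rule: infinite_finite_induct) (simp_all add: pderiv_add)

lemma Dx_add: "Dx (f + g) = Dx f + Dx g"
  by (rule fps_ext) (simp add: pderiv_add)

lemma Dx_diff: "Dx (f - g) = Dx f - Dx g"
  by (rule fps_ext) (simp add: pderiv_diff)

lemma Dx_mult: "Dx (f * g) = Dx f * g + f * Dx g"
proof (rule fps_ext)
  fix n
  show "fps_nth (Dx (f * g)) n = fps_nth (Dx f * g + f * Dx g) n"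
    unfolding Dx_nth fps_add_nth fps_mult_nth pderiv_sum2 sum.distrib[symmetric]
    by (rule sum.cong) (simp_all add: pderiv_mult algebra_simps)
qed

lemma Dx_one: "Dx 1 = 0"
  by (rule fps_ext) simp

lemma Dx_cst: "Dx (cst f) = 0"
  by (rule fps_ext) (simp add: pderiv_pCons)

lemma Dx_Xp: "Dx Xp = 1"
  by (rule fps_ext) (simp add: Xp_def pderiv_pCons)

lemma Dx_U: "Dx U = - Ap"
  by (simp add: U_def Dx_diff Dx_one Dx_mult Dx_Xp Ap_def Dx_cst)

lemma Dx_H: "Dx H = Ap * H ^ 2"
proof -
  have "Dx (H * U) = 0" by (simp only: H_U Dx_one)
  hence "Dx H * U = H * Ap"
    by (simp add: Dx_mult Dx_U algebra_simps)
  hence e1: "Dx H * U * H = H * Ap * H" by simp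
  have e2: "Dx H * U * H = Dx H"
    using H_U by (simp add: mult.assoc mult.commute[of U H])
  have "Dx H = H * Ap * H" using e1 e2 by metis
  then show ?thesis by (simp add: power2_eq_square mult_ac)
qed

lemma Dx_power: "Dx (f ^ Suc k) = of_nat (Suc k) * f ^ k * Dx f"
  by (induction k) (simp_all add: Dx_mult algebra_simps)

lemma Dx_of_nat_mult: "Dx (of_nat c * f) = of_nat c * Dx f"
  by (rule fps_ext) (simp add: of_nat_poly_mult pderiv_smult del: of_nat_fact)

lemma Dx_Ap_pow: "Dx (Ap ^ k) = 0"
  by (simp add: Ap_def cst_power[symmetric] Dx_cst)

lemma Dx_iter_H: "(Dx ^^ k) H = of_nat (fact k) * Ap ^ k * H ^ Suc k"
proof (induction k)
  case 0
  then show ?case by simp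
next
  case (Suc k)
  have "(Dx ^^ Suc k) H = of_nat (fact k) * (Ap ^ k * Dx (H ^ Suc k))"
  proof -
    have "Dx (Ap ^ k * H ^ Suc k) = Ap ^ k * Dx (H ^ Suc k)"
      by (simp only: Dx_mult Dx_Ap_pow) simp
    then show ?thesis
      by (simp only: funpow.simps o_apply Suc.IH mult.assoc Dx_of_nat_mult)
  qed
  also have "\<dots> = of_nat (fact (Suc k)) * Ap ^ Suc k * H ^ Suc (Suc k)"
    by (simp only: Dx_power Dx_H) (simp add: algebra_simps power2_eq_square)
  finally show ?case .
qed

lemma Dx_iter_nth: "fps_nth ((Dx ^^ k) f) n = (pderiv ^^ k) (fps_nth f n)"
  by (induction k) simp_all

lemma deriv_iter_poly: "(deriv ^^ k) (poly p) = poly ((pderiv ^^ k) p)"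
proof (induction k arbitrary: p)
  case 0
  then show ?case by simp
next
  case (Suc k)
  have "(deriv ^^ Suc k) (poly p) = deriv (poly ((pderiv ^^ k) p))"
    using Suc.IH by simp
  also have "\<dots> = poly (pderiv ((pderiv ^^ k) p))"
    by (rule ext) (rule DERIV_imp_deriv, rule poly_DERIV)
  finally show ?case by simp
qed

lemma key_fps: "P ^ k * (Dx ^^ k) H = Ap ^ k * B k"
  by (simp add: Dx_iter_H B_closed mult_ac)

lemma key_nth: "[:1,1:] ^ k * smult (1 / fact n) ((pderiv ^^ k) (Wp n)) =
  (\<Sum>m = 0..n. [: fps_nth (Ar ^ k) m :] * smult (1 / fact (n - m)) (SS k (n - m)))"
proof -
  have "fps_nth (P ^ k * (Dx ^^ k) H) n = fps_nth (Ap ^ k * B k) n"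
    by (simp only: key_fps)
  moreover have "fps_nth (P ^ k * (Dx ^^ k) H) n = [:1,1:] ^ k * smult (1 / fact n) ((pderiv ^^ k) (Wp n))"
    by (simp add: P_def Dx_iter_nth H_nth higher_pderiv_smult)
  moreover have "fps_nth (Ap ^ k * B k) n = (\<Sum>m = 0..n. [: fps_nth (Ar ^ k) m :] * smult (1 / fact (n - m)) (SS k (n - m)))"
    by (simp only: fps_mult_nth Ap_def cst_power[symmetric] B_nth cst_nth)
  ultimately show ?thesis by simp
qed

lemma poly_SS: "poly (SS k N) x = (\<Sum>j\<le>k. real (stirling (Suc k) (Suc j)) * geom_poly (N + j) x)"
  by (simp add: SS_def poly_sum poly_Wp)

theorem mainTheorem2:
  fixes n k :: nat and x :: real
  assumes "x \<noteq> -1"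
  shows "(deriv ^^ k) (geom_poly n) x =
    fact k / (1 + x) ^ k *
      (\<Sum>m = k..n. \<Sum>j = 0..k.
         of_nat (n choose m) * of_nat (Stirling m k) * of_nat (stirling (k + 1) (j + 1))
         * geom_poly (n - m + j) x)"
proof -
  define D where "D = (deriv ^^ k) (geom_poly n) x"
  define T where "T N = (\<Sum>j\<le>k. real (stirling (Suc k) (Suc j)) * geom_poly (N + j) x)" for N
  have x1: "(1 + x) ^ k \<noteq> 0" using assms by (simp add: add_eq_0_iff)
  have D_eq: "D = poly ((pderiv ^^ k) (Wp n)) x"
    unfolding D_def by (simp add: deriv_iter_poly poly_Wp[symmetric])
  have "(1 + x) ^ k * (D / fact n) =
    (\<Sum>m = 0..n. (fact k * real (Stirling m k) / fact m) * (1 / fact (n - m)) * T (n - m))"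
    using arg_cong[OF key_nth, of "\<lambda>p. poly p x"]
    by (simp add: D_eq poly_sum Ar_pow poly_SS T_def mult_ac)
  hence "(1 + x) ^ k * D = fact n * (\<Sum>m = 0..n. (fact k * real (Stirling m k) / fact m) * (1 / fact (n - m)) * T (n - m))"
    by (simp add: field_simps)
  also have "\<dots> = fact k * (\<Sum>m = 0..n. (fact n / (fact m * fact (n - m))) * real (Stirling m k) * T (n - m))"
    unfolding sum_distrib_left by (rule sum.cong) (simp_all add: field_simps)
  finally have "D = fact k / (1 + x) ^ k * (\<Sum>m = 0..n. (fact n / (fact m * fact (n - m))) * real (Stirling m k) * T (n - m))"
    using x1 by (simp add: field_simps)
  also have "(\<Sum>m = 0..n. (fact n / (fact m * fact (n - m))) * real (Stirling m k) * T (n - m))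
      = (\<Sum>m = 0..n. real (n choose m) * real (Stirling m k) * T (n - m))"
    by (rule sum.cong) (simp_all add: binomial_fact)
  also have "\<dots> = (\<Sum>m = k..n. real (n choose m) * real (Stirling m k) * T (n - m))"
    by (rule sum.mono_neutral_right) auto
  also have "\<dots> = (\<Sum>m = k..n. \<Sum>j = 0..k.
         of_nat (n choose m) * of_nat (Stirling m k) * of_nat (stirling (k + 1) (j + 1))
         * geom_poly (n - m + j) x)"
    by (rule sum.cong) (simp_all add: T_def sum_distrib_left atLeast0AtMost mult_ac)
  finally show ?thesis unfolding D_def .
qed

end
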